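(* In the setting of the context, let $\{\mu_k\}_{k\in\mathbb{N}}$ be a strictly decreasing sequence of positive scalars and $\{w_k\}_{k\in\mathbb{N}}$ a sequence with $\|F^{\mu_k}(w_{k+1})\|\le\epsilon(\mu_k)$ for all $k$, such that for a subsequence indexed by $\mathcal K$, $w_{k+1}\to w^*$ as $k\in\mathcal K\to\infty$. Then for all $k\in\mathcal K$ sufficiently large, $$w^{w^*,1}_{k+1}=w_{k+1}-J_F(w_{k+1})^{-1}F^{\mu_{k+1}}(w_{k+1}),$$ i.e. $w^{w^*,1}_{k+1}-w_{k+1}$ is the Newton step for finding a root of $F^{\mu_{k+1}}$ at $w_{k+1}$.
   Context: Problem: minimize $f(x)$ subject to $c_{\mathcal I}(x)\ge0$, $c_{\mathcal E}(x)=0$, with $f,c_i\colon\mathbb{R}^n\to\mathbb{R}$, $c=(c_{\mathcal I}^T,c_{\mathcal E}^T)^T\in\mathbb{R}^m$, and $d\ge3$ the smallest number of times each of $f,c_1,\dots,c_m$ is continuously differentiable. Notation: $g=\nabla f$, $A$ the Jacobian of $c$, $H(x,\lambda)$ the Hessian in $x$ of $f(x)-\lambda^Tc(x)$, $[v]_S$ components of $v$ indexed by $S$, uppercase = diagonal matrix of the lowercase vector, $e$ the all-ones vector, $w=(x,\lambda)$. $F^\mu(x,\lambda)=\bigl(g(x)-A(x)^T\lambda;\ C_{\mathcal I}(x)[\lambda]_{\mathcal I}-\mu e;\ c_{\mathcal E}(x)\bigr)$ and $J_F$ denotes its Jacobian with respect to $w$ (independent of $\mu$). Let $x^*$ be a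 KKT point at which LICQ, strict complementarity (multiplier $\lambda^*$ with $[\lambda^*]_i>0$ for active inequality indices) and the strong second-order sufficiency condition ($p^TH(x^*,\lambda^* )p\ge\omega\|p\|^2$, $\omega>0$, for all $p$ orthogonal to all active constraint gradients) hold; $\lambda^*$ is unique; $w^*=(x^*,\lambda^* )$. Let $w^{w^*,0}$ be the locally unique $(d-1)$ times continuously differentiable function near $0$ with $F^0(w^{w^*,0}(r))=r$, $w^{w^*,0}(0)=w^*$. With $\mathrm{nml}(r)=r/\|r\|$ for $r\ne0$, $\mathrm{nml}(0)=0$, define for $\mu,r$ sufficiently small $w^{w^*,\mu,r}(\rho)=w^{w^*,0}\bigl(\rho\,\mathrm{nml}(r)+(0,\mu e^T,0)^T\bigr)$ (blocks of sizes $n,m_{\mathcal I},m_{\mathcal E}$). Set $r_{k+1}=F^{\mu_{k+1}}(w_{k+1})$ and let $w^{w^*,1}_{k+1}$ be the value at $\rho=0$ of the first-order Taylor polynomial of $\rho\mapsto w^{w^*,\mu_{k+1},r_{k+1}}(\rho)$ about $\rho=\|r_{k+1}\|$. $\epsilon$ is a positive function with $\epsilon(\mu)=\Theta(\mu)$. *)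

theory Defs
  imports "HOL-Analysis.Analysis" "HOL-Library.Landau_Symbols"
begin

text \<open>Constraint index set: a finite type 'm; the inequality indices form a set I,
  the equality indices are the complement E = - I.\<close>

fun Ck :: "nat \<Rightarrow> ('a::euclidean_space \<Rightarrow> real) \<Rightarrow> bool" where
  "Ck 0 h = continuous_on UNIV h"
| "Ck (Suc k) h = ((\<forall>x. h differentiable (at x)) \<and>
       (\<forall>v. Ck k (\<lambda>x. frechet_derivative h (at x) v)))"

definition pderiv :: "(real^'n \<Rightarrow> real) \<Rightarrow> 'n \<Rightarrow> real^'n \<Rightarrow> real" where
  "pderiv h j x = frechet_derivative h (at x) (axis j 1)"

definition grad :: "(real^'n \<Rightarrow> real) \<Rightarrow> real^'n \<Rightarrow> real^'n" where
  "grad h x = (\<chi> j. pderiv h j x)"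

definition jac :: "('m \<Rightarrow> real^'n \<Rightarrow> real) \<Rightarrow> real^'n \<Rightarrow> real^'n^'m" where
  "jac c x = (\<chi> i. grad (c i) x)"

definition hessian :: "(real^'n \<Rightarrow> real) \<Rightarrow> real^'n \<Rightarrow> real^'n^'n" where
  "hessian h x = (\<chi> j k. pderiv (\<lambda>y. pderiv h k y) j x)"

definition lag_hess :: "(real^'n \<Rightarrow> real) \<Rightarrow> ('m::finite \<Rightarrow> real^'n \<Rightarrow> real)
    \<Rightarrow> real^'n \<Rightarrow> real^'m \<Rightarrow> real^'n^'n" where
  "lag_hess f c x lam = hessian (\<lambda>y. f y - (\<Sum>i\<in>UNIV. lam $ i * c i y)) x"

definition Fmu :: "(real^'n \<Rightarrow> real) \<Rightarrow> ('m::finite \<Rightarrow> real^'n \<Rightarrow> real) \<Rightarrow> 'm set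
    \<Rightarrow> real \<Rightarrow> (real^'n) \<times> (real^'m) \<Rightarrow> (real^'n) \<times> (real^'m)" where
  "Fmu f c I mu w = (grad f (fst w) - transpose (jac c (fst w)) *v snd w,
       \<chi> i. if i \<in> I then c i (fst w) * snd w $ i - mu else c i (fst w))"

text \<open>J_F(w): Jacobian (derivative) of F^mu with respect to w (independent of mu)\<close>
definition JF :: "(real^'n \<Rightarrow> real) \<Rightarrow> ('m::finite \<Rightarrow> real^'n \<Rightarrow> real) \<Rightarrow> 'm set
    \<Rightarrow> (real^'n) \<times> (real^'m) \<Rightarrow> (real^'n) \<times> (real^'m) \<Rightarrow> (real^'n) \<times> (real^'m)" where
  "JF f c I w = frechet_derivative (Fmu f c I 0) (at w)"

definition nml :: "'a::real_normed_vector \<Rightarrow> 'a" where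
  "nml r = (if r = 0 then 0 else r /\<^sub>R norm r)"

definition shiftv :: "'m set \<Rightarrow> real \<Rightarrow> (real^'n) \<times> (real^'m)" where
  "shiftv I mu = (0, \<chi> i. if i \<in> I then mu else 0)"

text \<open>w^{w*,mu,r}(rho) for a given local inverse W = w^{w*,0}\<close>
definition wpath :: "((real^'n) \<times> (real^'m) \<Rightarrow> (real^'n) \<times> (real^'m)) \<Rightarrow> 'm set
    \<Rightarrow> real \<Rightarrow> (real^'n) \<times> (real^'m) \<Rightarrow> real \<Rightarrow> (real^'n) \<times> (real^'m)" where
  "wpath W I mu r rho = W (rho *\<^sub>R nml r + shiftv I mu)"

definition taylor1_at0 :: "((real^'n) \<times> (real^'m) \<Rightarrow> (real^'n) \<times> (real^'m)) \<Rightarrow> 'm set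
    \<Rightarrow> real \<Rightarrow> (real^'n) \<times> (real^'m) \<Rightarrow> (real^'n) \<times> (real^'m)" where
  "taylor1_at0 W I mu r = wpath W I mu r (norm r)
      + (0 - norm r) *\<^sub>R vector_derivative (wpath W I mu r) (at (norm r))"

end

theory Submission
  imports Defs
begin

definition C1 :: "('a::euclidean_space \<Rightarrow> 'b::real_normed_vector) \<Rightarrow> bool" where
  "C1 h \<longleftrightarrow> (\<exists>D. (\<forall>x. (h has_derivative D x) (at x)) \<and> (\<forall>v. continuous_on UNIV (\<lambda>x. D x v)))"

lemma Ck_Suc_imp: "Ck (Suc k) h \<Longrightarrow> Ck k h"
proof (induction k arbitrary: h)
  case 0
  then show ?case by (auto intro!: continuous_at_imp_continuous_on differentiable_imp_continuous_within)
next
  case (Suc k)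
  then show ?case by (metis Ck.simps(2))
qed

lemma Ck_add_imp: "Ck (k + j) h \<Longrightarrow> Ck k h"
  by (induction j arbitrary: h) (auto simp del: Ck.simps dest: Ck_Suc_imp)

lemma Ck2_C1: "Ck (Suc (Suc 0)) h \<Longrightarrow> C1 h"
  unfolding C1_def
proof (intro exI[of _ "\<lambda>x. frechet_derivative h (at x)"] conjI allI)
  fix x assume "Ck (Suc (Suc 0)) h"
  then show "(h has_derivative frechet_derivative h (at x)) (at x)"
    by (simp add: frechet_derivative_works[symmetric])
next
  fix v assume "Ck (Suc (Suc 0)) h"
  then have "\<forall>x. (\<lambda>x. frechet_derivative h (at x) v) differentiable (at x)" by simp
  then show "continuous_on UNIV (\<lambda>x. frechet_derivative h (at x) v)"
    by (auto intro!: continuous_at_imp_continuous_on differentiable_imp_continuous_within)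
qed

lemma Ck3_C1: "Ck (Suc (Suc (Suc 0))) h \<Longrightarrow> C1 h"
  using Ck2_C1 Ck_Suc_imp by blast

lemma Ck3_pderiv_C1: "Ck (Suc (Suc (Suc 0))) h \<Longrightarrow> C1 (pderiv h j)"
proof -
  assume "Ck (Suc (Suc (Suc 0))) h"
  then have "Ck (Suc (Suc 0)) (\<lambda>x. frechet_derivative h (at x) (axis j 1))"
    by (subst (asm) Ck.simps(2)) blast
  then show ?thesis unfolding pderiv_def[abs_def] using Ck2_C1 by blast
qed

lemma C1_const: "C1 (\<lambda>x. k)"
  unfolding C1_def by (auto intro!: exI[of _ "\<lambda>x v. 0"] derivative_eq_intros)

lemma C1_add: "C1 g \<Longrightarrow> C1 h \<Longrightarrow> C1 (\<lambda>x. g x + h x)"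
  unfolding C1_def
  apply (elim exE conjE)
  subgoal for D E
    by (rule exI[of _ "\<lambda>x v. D x v + E x v"]) (auto intro!: derivative_eq_intros continuous_intros)
  done

lemma C1_diff: "C1 g \<Longrightarrow> C1 h \<Longrightarrow> C1 (\<lambda>x. g x - h x)"
  unfolding C1_def
  apply (elim exE conjE)
  subgoal for D E
    by (rule exI[of _ "\<lambda>x v. D x v - E x v"]) (auto intro!: derivative_eq_intros continuous_intros)
  done

lemma C1_mult: "C1 (g::'a::euclidean_space\<Rightarrow>real) \<Longrightarrow> C1 h \<Longrightarrow> C1 (\<lambda>x. g x * h x)"
proof -
  assume "C1 g" "C1 h"
  then obtain D E where D: "\<forall>x. (g has_derivative D x) (at x)" "\<forall>v. continuous_on UNIV (\<lambda>x. D x v)"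
    and E: "\<forall>x. (h has_derivative E x) (at x)" "\<forall>v. continuous_on UNIV (\<lambda>x. E x v)"
    unfolding C1_def by blast
  have cg: "continuous_on UNIV g" "continuous_on UNIV h" using D E
    by (meson continuous_at_imp_continuous_on has_derivative_continuous)+
  show ?thesis unfolding C1_def
    apply (rule exI[of _ "\<lambda>x v. g x * E x v + D x v * h x"])
    using D E cg by (auto intro!: derivative_eq_intros continuous_intros)
qed

lemma C1_sum: "finite S \<Longrightarrow> (\<And>i. i \<in> S \<Longrightarrow> C1 (g i)) \<Longrightarrow> C1 (\<lambda>x. \<Sum>i\<in>S. g i x)"
proof (induction S rule: finite_induct)
  case empty then show ?case by (simp add: C1_const)
next
  case (insert a S)
  then show ?case by (simp add: C1_add)
qed

lemma C1_fst: "C1 (h::'a::euclidean_space \<Rightarrow> real) \<Longrightarrow> C1 (\<lambda>w::'a\<times>'b::euclidean_space. h (fst w))"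
  unfolding C1_def
  apply (elim exE conjE)
  subgoal for D
    apply (rule exI[of _ "\<lambda>w v. D (fst w) (fst v)"])
    apply (auto intro!: has_derivative_compose[of fst, where g=h, OF has_derivative_fst[OF has_derivative_ident]])
    apply (rule continuous_on_compose2[where g="\<lambda>x. D x _"]) apply (auto intro: continuous_intros)
    done
  done

lemma C1_snd_nth: "C1 (\<lambda>w::'a::euclidean_space\<times>(real^'m). snd w $ i)"
  unfolding C1_def
  by (rule exI[of _ "\<lambda>w v. snd v $ i"])
    (auto intro!: bounded_linear_imp_has_derivative bounded_linear_compose[OF bounded_linear_vec_nth bounded_linear_snd])

lemma C1_components:
  fixes h :: "'a::euclidean_space \<Rightarrow> 'b::euclidean_space"
  assumes "\<And>b. b \<in> Basis \<Longrightarrow> C1 (\<lambda>x. h x \<bullet> b)"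
  shows "\<exists>D. (\<forall>x. (h has_derivative D x) (at x)) \<and> (\<forall>v. continuous_on UNIV (\<lambda>x. D x v))"
proof -
  have "\<forall>b\<in>Basis. \<exists>D. (\<forall>x. ((\<lambda>x. h x \<bullet> b) has_derivative D x) (at x)) \<and> (\<forall>v. continuous_on UNIV (\<lambda>x. D x v))"
    using assms unfolding C1_def by blast
  then obtain D where D: "\<And>b. b\<in>Basis \<Longrightarrow> (\<forall>x. ((\<lambda>x. h x \<bullet> b) has_derivative D b x) (at x)) \<and> (\<forall>v. continuous_on UNIV (\<lambda>x. D b x v))"
    by metis
  have h: "h = (\<lambda>x. \<Sum>b\<in>Basis. (h x \<bullet> b) *\<^sub>R b)" by (simp add: euclidean_representation)
  show ?thesis
    apply (rule exI[of _ "\<lambda>x v. \<Sum>b\<in>Basis. D b x v *\<^sub>R b"])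
    apply (subst h)
    using D by (auto intro!: has_derivative_sum has_derivative_scaleR_left continuous_intros)
qed

lemma C1_onorm:
  fixes h :: "'a::euclidean_space \<Rightarrow> 'b::euclidean_space"
  assumes D: "\<forall>x. (h has_derivative D x) (at x)" "\<forall>v. continuous_on UNIV (\<lambda>x. D x v)"
  shows "\<And>e. e > 0 \<Longrightarrow> \<exists>d>0. \<forall>x. dist a x < d \<longrightarrow> onorm (\<lambda>v. D x v - D a v) < e"
proof -
  fix e :: real assume e: "e > 0"
  have bl: "\<And>x. bounded_linear (D x)" using D has_derivative_bounded_linear by blast
  define B where "B x = Blinfun (D x)" for x
  have Bapp: "blinfun_apply (B x) = D x" for x by (simp add: B_def bl bounded_linear_Blinfun_apply)
  have "continuous (at a) B"
    apply (rule continuous_blinfun_componentwiseI1)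
    unfolding Bapp using D(2) by (simp add: continuous_on_eq_continuous_at)
  then obtain d where d: "d > 0" "\<forall>x. dist x a < d \<longrightarrow> dist (B x) (B a) < e"
    using e unfolding continuous_at_eps_delta by blast
  have "dist (B x) (B a) = onorm (\<lambda>v. D x v - D a v)" for x
    by (simp add: dist_norm norm_blinfun.rep_eq minus_blinfun.rep_eq Bapp)
  then show "\<exists>d>0. \<forall>x. dist a x < d \<longrightarrow> onorm (\<lambda>v. D x v - D a v) < e"
    using d by (metis dist_commute)
qed

lemma lin_rinv:
  fixes L :: "'a::euclidean_space \<Rightarrow> 'a"
  assumes "linear L" "L \<circ> M = id"
  shows "bij L" "\<And>y. inv L y = M y" "M \<circ> L = id"
proof -
  have s: "surj L" using assms(2) by (metis comp_apply id_apply surjI)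
  have i: "inj L" using linear_surj_imp_inj[OF assms(1) s] .
  show "bij L" using s i by (simp add: bij_def)
  show "inv L y = M y" for y using i assms(2) by (metis comp_apply id_apply inv_f_f)
  then have "M = inv L" by (simp add: fun_eq_iff)
  then show "M \<circ> L = id" using i by (simp add: inv_o_cancel)
qed

lemma F0_fst: "fst (Fmu f c I 0 w) $ j = pderiv f j (fst w) - (\<Sum>i\<in>UNIV. pderiv (c i) j (fst w) * snd w $ i)"
  by (simp add: Fmu_def matrix_vector_mult_def transpose_def jac_def grad_def)

lemma F0_snd: "snd (Fmu f c I 0 w) $ i = (if i\<in>I then c i (fst w) * snd w $ i else c i (fst w))"
  by (simp add: Fmu_def)

lemma F0_C1:
  fixes f :: "real^'n \<Rightarrow> real" and c :: "'m::finite \<Rightarrow> real^'n \<Rightarrow> real"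
  assumes f3: "Ck (Suc (Suc (Suc 0))) f" and c3: "\<forall>i. Ck (Suc (Suc (Suc 0))) (c i)"
  shows "\<exists>D. (\<forall>x. (Fmu f c I 0 has_derivative D x) (at x)) \<and> (\<forall>v. continuous_on UNIV (\<lambda>x. D x v))"
proof (rule C1_components)
  fix b :: "(real^'n) \<times> (real^'m)" assume b: "b \<in> Basis"
  have cf: "C1 (\<lambda>w::(real^'n) \<times> (real^'m). fst (Fmu f c I 0 w) $ j)" for j
    unfolding F0_fst
    by (intro C1_diff C1_sum C1_mult C1_fst C1_snd_nth Ck3_pderiv_C1 f3 c3[rule_format]) simp_all
  have cs: "C1 (\<lambda>w::(real^'n) \<times> (real^'m). snd (Fmu f c I 0 w) $ i)" for i
  proof (cases "i \<in> I")
    case True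
    then show ?thesis unfolding F0_snd
      by (simp, intro C1_mult C1_fst C1_snd_nth Ck3_C1 c3[rule_format])
  next
    case False
    then show ?thesis unfolding F0_snd
      by (simp, intro C1_fst Ck3_C1 c3[rule_format])
  qed
  from b consider (l) j where "b = (axis j 1, 0)" | (r) i where "b = (0, axis i 1)"
    by (auto simp: Basis_prod_def Basis_vec_def)
  then show "C1 (\<lambda>w. Fmu f c I 0 w \<bullet> b)"
  proof cases
    case l then show ?thesis using cf by (simp add: inner_prod_def inner_axis)
  next
    case r then show ?thesis using cs by (simp add: inner_prod_def inner_axis)
  qed
qed

theorem proposition1:
  fixes f :: "real^'n \<Rightarrow> real" and c :: "'m::finite \<Rightarrow> real^'n \<Rightarrow> real"
    and I :: "'m set" and d :: nat
    and xs :: "real^'n" and ls :: "real^'m" and omega :: real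
    and W :: "(real^'n) \<times> (real^'m) \<Rightarrow> (real^'n) \<times> (real^'m)" and U :: "((real^'n) \<times> (real^'m)) set"
    and eps :: "real \<Rightarrow> real" and mu :: "nat \<Rightarrow> real"
    and w :: "nat \<Rightarrow> (real^'n) \<times> (real^'m)" and K :: "nat set"
  assumes d3: "d \<ge> 3"
    and smooth_f: "Ck d f" and smooth_c: "\<forall>i. Ck d (c i)"
    \<comment> \<open>KKT point x* with multiplier lambda*\<close>
    and kkt_stat: "grad f xs - transpose (jac c xs) *v ls = 0"
    and kkt_ineq: "\<forall>i\<in>I. c i xs \<ge> 0 \<and> ls $ i \<ge> 0 \<and> ls $ i * c i xs = 0"
    and kkt_eq: "\<forall>i\<in>-I. c i xs = 0"
    \<comment> \<open>LICQ: gradients of active constraints are linearly independent\<close>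
    and licq: "inj_on (\<lambda>i. grad (c i) xs) {i. i \<notin> I \<or> c i xs = 0}
               \<and> independent ((\<lambda>i. grad (c i) xs) ` {i. i \<notin> I \<or> c i xs = 0})"
    \<comment> \<open>strict complementarity\<close>
    and strict_comp: "\<forall>i\<in>I. c i xs = 0 \<longrightarrow> ls $ i > 0"
    \<comment> \<open>strong second-order sufficiency\<close>
    and omega_pos: "omega > 0"
    and ssosc: "\<forall>p. (\<forall>i. (i \<notin> I \<or> c i xs = 0) \<longrightarrow> grad (c i) xs \<bullet> p = 0)
                   \<longrightarrow> p \<bullet> (lag_hess f c xs ls *v p) \<ge> omega * (norm p)\<^sup>2"
    \<comment> \<open>W = w^{w*,0}: the local inverse of F^0 near 0 with W(0) = w*\<close>
    and U_open: "open U" and U0: "0 \<in> U"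
    and W0: "W 0 = (xs, ls)"
    and W_inv: "\<forall>r\<in>U. Fmu f c I 0 (W r) = r"
    and W_diff: "\<forall>r\<in>U. W differentiable (at r)"
    \<comment> \<open>epsilon positive with epsilon(mu) = Theta(mu)\<close>
    and eps_pos: "\<forall>m>0. eps m > 0"
    and eps_Theta: "eps \<in> \<Theta>[at_right 0](\<lambda>m. m)"
    \<comment> \<open>the iterates\<close>
    and mu_pos: "\<forall>k. mu k > 0" and mu_dec: "\<forall>k. mu (Suc k) < mu k"
    and w_res: "\<forall>k. norm (Fmu f c I (mu k) (w (Suc k))) \<le> eps (mu k)"
    and K_inf: "infinite K"
    and w_conv: "\<forall>e>0. \<exists>N. \<forall>k\<in>K. k \<ge> N \<longrightarrow> dist (w (Suc k)) (xs, ls) < e"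
  shows "\<exists>N. \<forall>k\<in>K. k \<ge> N \<longrightarrow>
           bij (JF f c I (w (Suc k))) \<and>
           taylor1_at0 W I (mu (Suc k)) (Fmu f c I (mu (Suc k)) (w (Suc k)))
             = w (Suc k) - inv (JF f c I (w (Suc k))) (Fmu f c I (mu (Suc k)) (w (Suc k)))"
proof -
  define F0 where "F0 = Fmu f c I 0"
  define ws where "ws = (xs, ls)"
  have C3: "Ck (Suc (Suc (Suc 0))) h" if "Ck d h" for h
  proof -
    have "d = Suc (Suc (Suc 0)) + (d - 3)" using d3 by simp
    then show ?thesis using Ck_add_imp[of "Suc (Suc (Suc 0))" "d - 3" h] that by metis
  qed
  obtain D where D: "\<forall>x. (F0 has_derivative D x) (at x)" "\<forall>v. continuous_on UNIV (\<lambda>x. D x v)"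
    using F0_C1[of f c I] C3 smooth_f smooth_c unfolding F0_def by blast
  have JF: "JF f c I w = D w" for w
    unfolding JF_def F0_def[symmetric] using frechet_derivative_at D(1) by metis
  define W' where "W' s = frechet_derivative W (at s)" for s
  have Wd: "(W has_derivative W' s) (at s)" if "s \<in> U" for s
    using W_diff that frechet_derivative_works unfolding W'_def by blast
  have lin: "linear (D w)" for w using D(1) has_derivative_linear by blast
  have inv_rel: "D (W s) \<circ> W' s = id" if sU: "s \<in> U" for s
  proof -
    have a: "((F0 \<circ> W) has_derivative (D (W s) \<circ> W' s)) (at s)"
      by (rule diff_chain_at[OF Wd[OF sU]]) (use D(1) in blast)
    have "((\<lambda>x. x) has_derivative id) (at s)" by (simp add: id_def)
    then have b: "((F0 \<circ> W) has_derivative id) (at s)"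
      by (rule has_derivative_transform_within_open[OF _ U_open sU]) (use W_inv F0_def in simp)
    show ?thesis using has_derivative_unique[OF a b] .
  qed
  have F0ws: "F0 ws = 0" using W_inv U0 W0 unfolding F0_def ws_def by metis
  have g'f': "W' 0 \<circ> D ws = id"
    using lin_rinv(3)[OF lin inv_rel[OF U0]] W0 unfolding ws_def by simp
  have blW: "bounded_linear (W' 0)" using Wd[OF U0] has_derivative_bounded_linear by blast
  obtain \<rho> where rho: "\<rho> > 0" "inj_on F0 (ball ws \<rho>)"
    using has_derivative_locally_injective[of ws UNIV "W' 0" D F0, OF _ _ blW g'f'] D(1) C1_onorm[OF D]
    by auto
  obtain \<eta>0 where eta0: "\<eta>0 > 0" "ball 0 \<eta>0 \<subseteq> U" using U_open U0 open_contains_ball by blast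
  have "continuous (at 0) W" using W_diff U0 differentiable_imp_continuous_within by blast
  then obtain \<eta>1 where eta1: "\<eta>1 > 0" "\<forall>x. dist x 0 < \<eta>1 \<longrightarrow> dist (W x) ws < \<rho>"
    using rho(1) W0 unfolding continuous_at_eps_delta ws_def by metis
  define \<eta> where "\<eta> = min \<eta>0 \<eta>1"
  have "continuous (at ws) F0" using D(1) has_derivative_continuous by blast
  then obtain \<delta> where delta: "\<delta> > 0" "\<forall>x. dist x ws < \<delta> \<longrightarrow> dist (F0 x) 0 < \<eta>"
    using eta0(1) eta1(1) F0ws unfolding continuous_at_eps_delta \<eta>_def by (metis min_less_iff_conj)
  define \<delta>' where "\<delta>' = min \<delta> \<rho>"
  have key: "F0 v \<in> U \<and> W (F0 v) = v" if v: "dist v ws < \<delta>'" for v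
  proof -
    have ds: "dist (F0 v) 0 < \<eta>" using delta(2)[rule_format, of v] v unfolding \<delta>'_def by simp
    then have sU: "F0 v \<in> U" using eta0(2) unfolding \<eta>_def by (auto simp: dist_commute)
    have "dist (W (F0 v)) ws < \<rho>" using eta1(2)[rule_format, of "F0 v"] ds unfolding \<eta>_def by simp
    moreover have "dist v ws < \<rho>" using v unfolding \<delta>'_def by auto
    moreover have "F0 (W (F0 v)) = F0 v" using W_inv sU unfolding F0_def by blast
    ultimately have "W (F0 v) = v" using rho(2) by (auto simp: dist_commute intro: inj_onD)
    then show ?thesis using sU by blast
  qed
  have "\<delta>' > 0" using delta rho unfolding \<delta>'_def by auto
  then obtain N where N: "\<forall>k\<in>K. k \<ge> N \<longrightarrow> dist (w (Suc k)) ws < \<delta>'"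
    using w_conv unfolding ws_def by blast
  show ?thesis
  proof (intro exI[of _ N] ballI impI)
    fix k assume kK: "k \<in> K" and kN: "N \<le> k"
    define v where "v = w (Suc k)"
    define m where "m = mu (Suc k)"
    define r where "r = Fmu f c I m v"
    define s where "s = F0 v"
    have sU: "s \<in> U" and Ws: "W s = v" using key N kK kN unfolding s_def v_def by auto
    have rs: "r + shiftv I m = s"
      unfolding r_def s_def F0_def Fmu_def shiftv_def by (auto simp: vec_eq_iff)
    have nr: "norm r *\<^sub>R nml r = r" by (simp add: nml_def)
    have rel: "D v \<circ> W' s = id" using inv_rel[OF sU] Ws by simp
    have bij: "bij (JF f c I v)" using lin_rinv(1)[OF lin rel] JF by simp
    have invr: "inv (JF f c I v) r = W' s r" using lin_rinv(2)[OF lin rel] JF by simp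
    have wp: "wpath W I m r = (\<lambda>t. W (t *\<^sub>R nml r + shiftv I m))" by (simp add: fun_eq_iff wpath_def)
    have h1: "((\<lambda>t. t *\<^sub>R nml r + shiftv I m) has_derivative (\<lambda>t. t *\<^sub>R nml r)) (at (norm r))"
      by (auto intro!: derivative_eq_intros)
    have h2: "(W has_derivative W' s) (at (norm r *\<^sub>R nml r + shiftv I m))"
      using Wd[OF sU] nr rs by simp
    have linW: "linear (W' s)" using Wd[OF sU] has_derivative_linear by blast
    have "((\<lambda>t. W (t *\<^sub>R nml r + shiftv I m)) has_derivative (\<lambda>t. W' s (t *\<^sub>R nml r))) (at (norm r))"
      by (rule has_derivative_compose[OF h1 h2])
    then have "(wpath W I m r has_vector_derivative W' s (nml r)) (at (norm r))"
      unfolding wp has_vector_derivative_def using linear_scale[OF linW] by simp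
    then have vd: "vector_derivative (wpath W I m r) (at (norm r)) = W' s (nml r)"
      by (rule vector_derivative_at)
    have "taylor1_at0 W I m r = v + (0 - norm r) *\<^sub>R W' s (nml r)"
      unfolding taylor1_at0_def vd using nr rs Ws by (simp add: wpath_def)
    also have "\<dots> = v - W' s r"
      using linear_scale[OF linW, of "norm r" "nml r"] nr by (simp add: algebra_simps)
    finally show "bij (JF f c I (w (Suc k))) \<and>
           taylor1_at0 W I (mu (Suc k)) (Fmu f c I (mu (Suc k)) (w (Suc k)))
             = w (Suc k) - inv (JF f c I (w (Suc k))) (Fmu f c I (mu (Suc k)) (w (Suc k)))"
      using bij invr unfolding v_def m_def r_def by simp
  qed
qed

end
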